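(* Let $k$ be a ring and let $G$ be a group. Then for every integer $n\ge1$ there is a canonical ring isomorphism $D^1(M_n(k)[G])\simeq M_n(D^1(k[G]))$.
   Context: For a ring $R$ and group $G$, $R[G]$ is the group ring and $(R[G])[G]$ the set of finitely supported maps $\beta\colon G\to R[G]$. $D^1(R[G])=R[G]\times(R[G])[G]$ with componentwise addition and multiplication $(\alpha_1,\beta_1)*(\alpha_2,\beta_2)=(\alpha_1\alpha_2,\alpha_1\beta_2+\beta_1\alpha_2+\beta_1\beta_2)$, where $\alpha_1\alpha_2$ is the group ring product and $(\alpha\beta)(g)(h)=\sum_{t\in G}\alpha(t)\beta(gt)(t^{-1}h)$, $(\beta\alpha)(g)(h)=\sum_t\beta(g)(t)\alpha(t^{-1}h)$, $(\beta\gamma)(g)(h)=\sum_t\beta(g)(t)\gamma(gt)(t^{-1}h)$. $M_n(\cdot)$ denotes $n\times n$ matrices. *)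

theory Defs
  imports "HOL-Algebra.QuotRing"
begin

definition gsupp :: "('a, 'm) ring_scheme \<Rightarrow> 'g monoid \<Rightarrow> ('g \<Rightarrow> 'a) \<Rightarrow> 'g set" where
  "gsupp R G f = {t \<in> carrier G. f t \<noteq> \<zero>\<^bsub>R\<^esub>}"

definition group_ring :: "('a, 'm) ring_scheme \<Rightarrow> 'g monoid \<Rightarrow> ('g \<Rightarrow> 'a) ring" where
  "group_ring R G =
    \<lparr> carrier = {f. (\<forall>g\<in>carrier G. f g \<in> carrier R) \<and> (\<forall>g. g \<notin> carrier G \<longrightarrow> f g = \<zero>\<^bsub>R\<^esub>)
                    \<and> finite (gsupp R G f)},
      mult = (\<lambda>f h x. if x \<in> carrier G
                       then finsum R (\<lambda>t. f t \<otimes>\<^bsub>R\<^esub> h (inv\<^bsub>G\<^esub> t \<otimes>\<^bsub>G\<^esub> x)) (gsupp R G f)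
                       else \<zero>\<^bsub>R\<^esub>),
      one = (\<lambda>x. if x = \<one>\<^bsub>G\<^esub> then \<one>\<^bsub>R\<^esub> else \<zero>\<^bsub>R\<^esub>),
      zero = (\<lambda>x. \<zero>\<^bsub>R\<^esub>),
      add = (\<lambda>f h x. if x \<in> carrier G then f x \<oplus>\<^bsub>R\<^esub> h x else \<zero>\<^bsub>R\<^esub>) \<rparr>"

text \<open>The ring D^1(R[G]) = R[G] x (R[G])[G] with the twisted multiplication.\<close>
definition D1_mult :: "('a, 'm) ring_scheme \<Rightarrow> 'g monoid \<Rightarrow>
    ('g \<Rightarrow> 'a) \<times> ('g \<Rightarrow> 'g \<Rightarrow> 'a) \<Rightarrow> ('g \<Rightarrow> 'a) \<times> ('g \<Rightarrow> 'g \<Rightarrow> 'a) \<Rightarrow> ('g \<Rightarrow> 'a) \<times> ('g \<Rightarrow> 'g \<Rightarrow> 'a)" where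
  "D1_mult R G p q =
    (let (a1, b1) = p; (a2, b2) = q; RG = group_ring R G;
         ab = (\<lambda>g h. if g \<in> carrier G \<and> h \<in> carrier G then
                 finsum R (\<lambda>t. a1 t \<otimes>\<^bsub>R\<^esub> b2 (g \<otimes>\<^bsub>G\<^esub> t) (inv\<^bsub>G\<^esub> t \<otimes>\<^bsub>G\<^esub> h)) (gsupp R G a1)
               else \<zero>\<^bsub>R\<^esub>);
         ba = (\<lambda>g h. if g \<in> carrier G \<and> h \<in> carrier G then
                 finsum R (\<lambda>t. b1 g t \<otimes>\<^bsub>R\<^esub> a2 (inv\<^bsub>G\<^esub> t \<otimes>\<^bsub>G\<^esub> h)) (gsupp R G (b1 g))
               else \<zero>\<^bsub>R\<^esub>);
         bb = (\<lambda>g h. if g \<in> carrier G \<and> h \<in> carrier G then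
                 finsum R (\<lambda>t. b1 g t \<otimes>\<^bsub>R\<^esub> b2 (g \<otimes>\<^bsub>G\<^esub> t) (inv\<^bsub>G\<^esub> t \<otimes>\<^bsub>G\<^esub> h)) (gsupp R G (b1 g))
               else \<zero>\<^bsub>R\<^esub>)
     in (a1 \<otimes>\<^bsub>RG\<^esub> a2,
         (\<lambda>g h. if g \<in> carrier G \<and> h \<in> carrier G then ab g h \<oplus>\<^bsub>R\<^esub> ba g h \<oplus>\<^bsub>R\<^esub> bb g h
                else \<zero>\<^bsub>R\<^esub>)))"

definition D1 :: "('a, 'm) ring_scheme \<Rightarrow> 'g monoid \<Rightarrow> (('g \<Rightarrow> 'a) \<times> ('g \<Rightarrow> 'g \<Rightarrow> 'a)) ring" where
  "D1 R G =
    \<lparr> carrier = carrier (group_ring R G) \<times> carrier (group_ring (group_ring R G) G),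
      mult = D1_mult R G,
      one = (\<one>\<^bsub>group_ring R G\<^esub>, \<zero>\<^bsub>group_ring (group_ring R G) G\<^esub>),
      zero = (\<zero>\<^bsub>group_ring R G\<^esub>, \<zero>\<^bsub>group_ring (group_ring R G) G\<^esub>),
      add = (\<lambda>(a1, b1) (a2, b2). (a1 \<oplus>\<^bsub>group_ring R G\<^esub> a2, b1 \<oplus>\<^bsub>group_ring (group_ring R G) G\<^esub> b2)) \<rparr>"

definition matrix_ring :: "nat \<Rightarrow> ('b, 'm) ring_scheme \<Rightarrow> (nat \<Rightarrow> nat \<Rightarrow> 'b) ring" where
  "matrix_ring n A =
    \<lparr> carrier = {M. (\<forall>i<n. \<forall>j<n. M i j \<in> carrier A) \<and> (\<forall>i j. \<not> (i < n \<and> j < n) \<longrightarrow> M i j = \<zero>\<^bsub>A\<^esub>)},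
      mult = (\<lambda>M N i j. if i < n \<and> j < n then finsum A (\<lambda>l. M i l \<otimes>\<^bsub>A\<^esub> N l j) {..<n} else \<zero>\<^bsub>A\<^esub>),
      one = (\<lambda>i j. if i < n \<and> j < n \<and> i = j then \<one>\<^bsub>A\<^esub> else \<zero>\<^bsub>A\<^esub>),
      zero = (\<lambda>i j. \<zero>\<^bsub>A\<^esub>),
      add = (\<lambda>M N i j. if i < n \<and> j < n then M i j \<oplus>\<^bsub>A\<^esub> N i j else \<zero>\<^bsub>A\<^esub>) \<rparr>"

definition D1_matrix_canon ::
  "(('g \<Rightarrow> nat \<Rightarrow> nat \<Rightarrow> 'a) \<times> ('g \<Rightarrow> 'g \<Rightarrow> nat \<Rightarrow> nat \<Rightarrow> 'a))
     \<Rightarrow> nat \<Rightarrow> nat \<Rightarrow> ('g \<Rightarrow> 'a) \<times> ('g \<Rightarrow> 'g \<Rightarrow> 'a)" where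
  "D1_matrix_canon p = (\<lambda>i j. ((\<lambda>g. fst p g i j), (\<lambda>g h. snd p g h i j)))"

end

theory Submission
  imports Defs
begin

lemma gr_carrier:
  "f \<in> carrier (group_ring R G) \<longleftrightarrow> (\<forall>g\<in>carrier G. f g \<in> carrier R) \<and> (\<forall>g. g \<notin> carrier G \<longrightarrow> f g = \<zero>\<^bsub>R\<^esub>)
                    \<and> finite (gsupp R G f)"
  by (simp add: group_ring_def)

lemma gr_simps:
  "\<zero>\<^bsub>group_ring R G\<^esub> = (\<lambda>x. \<zero>\<^bsub>R\<^esub>)"
  "\<one>\<^bsub>group_ring R G\<^esub> = (\<lambda>x. if x = \<one>\<^bsub>G\<^esub> then \<one>\<^bsub>R\<^esub> else \<zero>\<^bsub>R\<^esub>)"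
  "f \<oplus>\<^bsub>group_ring R G\<^esub> h = (\<lambda>x. if x \<in> carrier G then f x \<oplus>\<^bsub>R\<^esub> h x else \<zero>\<^bsub>R\<^esub>)"
  "f \<otimes>\<^bsub>group_ring R G\<^esub> h = (\<lambda>x. if x \<in> carrier G
                       then finsum R (\<lambda>t. f t \<otimes>\<^bsub>R\<^esub> h (inv\<^bsub>G\<^esub> t \<otimes>\<^bsub>G\<^esub> x)) (gsupp R G f)
                       else \<zero>\<^bsub>R\<^esub>)"
  by (simp_all add: group_ring_def)

lemma gr_am:
  assumes "abelian_monoid R"
  shows "abelian_monoid (group_ring R G)"
proof -
  interpret abelian_monoid R by fact
  show ?thesis
  proof (rule abelian_monoidI)
    fix x y assume x: "x \<in> carrier (group_ring R G)" and y: "y \<in> carrier (group_ring R G)"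
    have "gsupp R G (x \<oplus>\<^bsub>group_ring R G\<^esub> y) \<subseteq> gsupp R G x \<union> gsupp R G y"
      using x y by (auto simp: gr_carrier gr_simps gsupp_def)
    then show "x \<oplus>\<^bsub>group_ring R G\<^esub> y \<in> carrier (group_ring R G)"
      using x y by (auto simp: gr_carrier gr_simps intro: finite_subset)
    show "x \<oplus>\<^bsub>group_ring R G\<^esub> y = y \<oplus>\<^bsub>group_ring R G\<^esub> x"
      using x y by (auto simp: gr_carrier gr_simps a_comm)
  next
    show "\<zero>\<^bsub>group_ring R G\<^esub> \<in> carrier (group_ring R G)"
      by (simp add: gr_carrier gr_simps gsupp_def)
  next
    fix x y z assume x: "x \<in> carrier (group_ring R G)" and y: "y \<in> carrier (group_ring R G)"
      and z: "z \<in> carrier (group_ring R G)"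
    show "x \<oplus>\<^bsub>group_ring R G\<^esub> y \<oplus>\<^bsub>group_ring R G\<^esub> z = x \<oplus>\<^bsub>group_ring R G\<^esub> (y \<oplus>\<^bsub>group_ring R G\<^esub> z)"
      using x y z by (auto simp: gr_carrier gr_simps a_assoc)
  next
    fix x assume x: "x \<in> carrier (group_ring R G)"
    show "\<zero>\<^bsub>group_ring R G\<^esub> \<oplus>\<^bsub>group_ring R G\<^esub> x = x"
      using x by (auto simp: gr_carrier gr_simps)
  qed
qed

lemma gr_finsum_eval:
  assumes "abelian_monoid R" "finite A" "F \<in> A \<rightarrow> carrier (group_ring R G)"
  shows "finsum (group_ring R G) F A x = finsum R (\<lambda>l. F l x) A"
  using assms(2,3)
proof (induction A rule: finite_induct)
  case empty
  have "finsum (group_ring R G) F {} = \<zero>\<^bsub>group_ring R G\<^esub>"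
    by (rule abelian_monoid.finsum_empty[OF gr_am[OF assms(1)]])
  then show ?case using abelian_monoid.zero_closed[OF assms(1)]
    by (simp add: gr_simps finsum_def finprod_def)
next
  case (insert a A)
  interpret R: abelian_monoid R by fact
  interpret GR: abelian_monoid "group_ring R G" by (rule gr_am) fact
  have cl: "\<And>l y. l \<in> insert a A \<Longrightarrow> F l y \<in> carrier R"
  proof -
    fix l y assume "l \<in> insert a A"
    then have "F l \<in> carrier (group_ring R G)" using insert(4) by auto
    then show "F l y \<in> carrier R" by (cases "y \<in> carrier G") (auto simp: gr_carrier)
  qed
  have "finsum (group_ring R G) F (insert a A) = F a \<oplus>\<^bsub>group_ring R G\<^esub> finsum (group_ring R G) F A"
    using insert by (intro GR.finsum_insert) auto
  moreover have "finsum R (\<lambda>l. F l x) (insert a A) = F a x \<oplus>\<^bsub>R\<^esub> finsum R (\<lambda>l. F l x) A"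
    using insert cl by (intro R.finsum_insert) auto
  moreover have "x \<notin> carrier G \<Longrightarrow> F a x = \<zero>\<^bsub>R\<^esub> \<and> (\<forall>l\<in>A. F l x = \<zero>\<^bsub>R\<^esub>)"
    using insert(4) unfolding Pi_def gr_carrier by blast
  moreover have "x \<notin> carrier G \<Longrightarrow> finsum R (\<lambda>l. F l x) A = \<zero>\<^bsub>R\<^esub>"
    using calculation(3) R.finsum_zero R.finsum_cong[of A A "\<lambda>l. F l x" "\<lambda>l. \<zero>\<^bsub>R\<^esub>"] by simp
  ultimately show ?case using insert cl by (auto simp: gr_simps)
qed

lemma mr_carrier:
  "M \<in> carrier (matrix_ring n A) \<longleftrightarrow> (\<forall>i<n. \<forall>j<n. M i j \<in> carrier A) \<and> (\<forall>i j. \<not> (i < n \<and> j < n) \<longrightarrow> M i j = \<zero>\<^bsub>A\<^esub>)"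
  by (simp add: matrix_ring_def)

lemma mr_simps:
  "\<zero>\<^bsub>matrix_ring n A\<^esub> = (\<lambda>i j. \<zero>\<^bsub>A\<^esub>)"
  "\<one>\<^bsub>matrix_ring n A\<^esub> = (\<lambda>i j. if i < n \<and> j < n \<and> i = j then \<one>\<^bsub>A\<^esub> else \<zero>\<^bsub>A\<^esub>)"
  "M \<oplus>\<^bsub>matrix_ring n A\<^esub> N = (\<lambda>i j. if i < n \<and> j < n then M i j \<oplus>\<^bsub>A\<^esub> N i j else \<zero>\<^bsub>A\<^esub>)"
  "M \<otimes>\<^bsub>matrix_ring n A\<^esub> N = (\<lambda>i j. if i < n \<and> j < n then finsum A (\<lambda>l. M i l \<otimes>\<^bsub>A\<^esub> N l j) {..<n} else \<zero>\<^bsub>A\<^esub>)"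
  by (simp_all add: matrix_ring_def)

lemma mr_am:
  assumes "abelian_monoid R"
  shows "abelian_monoid (matrix_ring n R)"
proof -
  interpret abelian_monoid R by fact
  show ?thesis
  proof (rule abelian_monoidI)
    fix x y assume x: "x \<in> carrier (matrix_ring n R)" and y: "y \<in> carrier (matrix_ring n R)"
    then show "x \<oplus>\<^bsub>matrix_ring n R\<^esub> y \<in> carrier (matrix_ring n R)"
      by (auto simp: mr_carrier mr_simps)
    show "x \<oplus>\<^bsub>matrix_ring n R\<^esub> y = y \<oplus>\<^bsub>matrix_ring n R\<^esub> x"
      using x y by (auto simp: mr_carrier mr_simps a_comm intro!: ext)
  next
    show "\<zero>\<^bsub>matrix_ring n R\<^esub> \<in> carrier (matrix_ring n R)"
      by (simp add: mr_carrier mr_simps)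
  next
    fix x y z assume x: "x \<in> carrier (matrix_ring n R)" and y: "y \<in> carrier (matrix_ring n R)"
      and z: "z \<in> carrier (matrix_ring n R)"
    show "x \<oplus>\<^bsub>matrix_ring n R\<^esub> y \<oplus>\<^bsub>matrix_ring n R\<^esub> z = x \<oplus>\<^bsub>matrix_ring n R\<^esub> (y \<oplus>\<^bsub>matrix_ring n R\<^esub> z)"
      using x y z by (auto simp: mr_carrier mr_simps a_assoc intro!: ext)
  next
    fix x assume x: "x \<in> carrier (matrix_ring n R)"
    show "\<zero>\<^bsub>matrix_ring n R\<^esub> \<oplus>\<^bsub>matrix_ring n R\<^esub> x = x"
      using x by (auto simp: mr_carrier mr_simps intro!: ext)
  qed
qed

lemma mr_finsum_eval:
  assumes "abelian_monoid R" "finite A" "F \<in> A \<rightarrow> carrier (matrix_ring n R)" "i < n" "j < n"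
  shows "finsum (matrix_ring n R) F A i j = finsum R (\<lambda>l. F l i j) A"
  using assms(2,3)
proof (induction A rule: finite_induct)
  case empty
  have "finsum (matrix_ring n R) F {} = \<zero>\<^bsub>matrix_ring n R\<^esub>"
    by (rule abelian_monoid.finsum_empty[OF mr_am[OF assms(1)]])
  then show ?case using abelian_monoid.zero_closed[OF assms(1)]
    by (simp add: mr_simps finsum_def finprod_def)
next
  case (insert a A)
  interpret R: abelian_monoid R by fact
  interpret GR: abelian_monoid "matrix_ring n R" by (rule mr_am) fact
  have cl: "\<And>l. l \<in> insert a A \<Longrightarrow> F l i j \<in> carrier R"
  proof -
    fix l assume "l \<in> insert a A"
    then have "F l \<in> carrier (matrix_ring n R)" using insert(4) by auto
    then show "F l i j \<in> carrier R" using assms(4,5) by (auto simp: mr_carrier)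
  qed
  have "finsum (matrix_ring n R) F (insert a A) = F a \<oplus>\<^bsub>matrix_ring n R\<^esub> finsum (matrix_ring n R) F A"
    using insert by (intro GR.finsum_insert) auto
  moreover have "finsum R (\<lambda>l. F l i j) (insert a A) = F a i j \<oplus>\<^bsub>R\<^esub> finsum R (\<lambda>l. F l i j) A"
    using insert cl by (intro R.finsum_insert) auto
  ultimately show ?case using insert cl assms(4,5) by (auto simp: mr_simps)
qed

lemma D1_carrier:
  "p \<in> carrier (D1 R G) \<longleftrightarrow> fst p \<in> carrier (group_ring R G) \<and> snd p \<in> carrier (group_ring (group_ring R G) G)"
  by (cases p) (simp add: D1_def)

lemma D1_simps:
  "\<zero>\<^bsub>D1 R G\<^esub> = (\<zero>\<^bsub>group_ring R G\<^esub>, \<zero>\<^bsub>group_ring (group_ring R G) G\<^esub>)"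
  "\<one>\<^bsub>D1 R G\<^esub> = (\<one>\<^bsub>group_ring R G\<^esub>, \<zero>\<^bsub>group_ring (group_ring R G) G\<^esub>)"
  "p \<oplus>\<^bsub>D1 R G\<^esub> q = (fst p \<oplus>\<^bsub>group_ring R G\<^esub> fst q, snd p \<oplus>\<^bsub>group_ring (group_ring R G) G\<^esub> snd q)"
  "p \<otimes>\<^bsub>D1 R G\<^esub> q = D1_mult R G p q"
  by (simp_all add: D1_def split: prod.splits)

lemma D1_am:
  assumes "abelian_monoid R"
  shows "abelian_monoid (D1 R G)"
proof -
  interpret A: abelian_monoid "group_ring R G" by (rule gr_am) fact
  interpret B: abelian_monoid "group_ring (group_ring R G) G" by (rule gr_am) (rule gr_am, fact)
  show ?thesis
    by (rule abelian_monoidI)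
       (auto simp: D1_carrier D1_simps A.a_ac B.a_ac prod_eq_iff)
qed

lemma D1_finsum:
  assumes "abelian_monoid R" "finite A" "F \<in> A \<rightarrow> carrier (D1 R G)"
  shows "finsum (D1 R G) F A = (finsum (group_ring R G) (\<lambda>l. fst (F l)) A, finsum (group_ring (group_ring R G) G) (\<lambda>l. snd (F l)) A)"
  using assms(2,3)
proof (induction A rule: finite_induct)
  case empty
  interpret A: abelian_monoid "group_ring R G" by (rule gr_am) fact
  interpret B: abelian_monoid "group_ring (group_ring R G) G" by (rule gr_am) (rule gr_am, fact)
  interpret C: abelian_monoid "D1 R G" by (rule D1_am) fact
  show ?case by (simp add: D1_simps)
next
  case (insert a A)
  interpret A: abelian_monoid "group_ring R G" by (rule gr_am) fact
  interpret B: abelian_monoid "group_ring (group_ring R G) G" by (rule gr_am) (rule gr_am, fact)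
  interpret C: abelian_monoid "D1 R G" by (rule D1_am) fact
  have cl: "\<And>l. l \<in> insert a A \<Longrightarrow> fst (F l) \<in> carrier (group_ring R G) \<and> snd (F l) \<in> carrier (group_ring (group_ring R G) G)"
    using insert(4) by (auto simp: D1_carrier)
  have "finsum (D1 R G) F (insert a A) = F a \<oplus>\<^bsub>D1 R G\<^esub> finsum (D1 R G) F A"
    using insert by (intro C.finsum_insert) auto
  moreover have "finsum (group_ring R G) (\<lambda>l. fst (F l)) (insert a A) = fst (F a) \<oplus>\<^bsub>group_ring R G\<^esub> finsum (group_ring R G) (\<lambda>l. fst (F l)) A"
    using insert cl by (intro A.finsum_insert) auto
  moreover have "finsum (group_ring (group_ring R G) G) (\<lambda>l. snd (F l)) (insert a A) = snd (F a) \<oplus>\<^bsub>group_ring (group_ring R G) G\<^esub> finsum (group_ring (group_ring R G) G) (\<lambda>l. snd (F l)) A"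
    using insert cl by (intro B.finsum_insert) auto
  ultimately show ?case using insert by (simp add: D1_simps)
qed

lemma (in abelian_monoid) finsum_swap:
  assumes "finite A" "finite B" "\<And>a b. a \<in> A \<Longrightarrow> b \<in> B \<Longrightarrow> f a b \<in> carrier G"
  shows "finsum G (\<lambda>a. finsum G (\<lambda>b. f a b) B) A = finsum G (\<lambda>b. finsum G (\<lambda>a. f a b) A) B"
  using assms(1,3)
proof (induction A rule: finite_induct)
  case empty
  then show ?case by simp
next
  case (insert x A)
  have "finsum G (\<lambda>a. finsum G (\<lambda>b. f a b) B) (insert x A) = finsum G (\<lambda>b. f x b) B \<oplus> finsum G (\<lambda>a. finsum G (\<lambda>b. f a b) B) A"
    using insert by (intro finsum_insert) (auto intro!: finsum_closed)
  also have "\<dots> = finsum G (\<lambda>b. f x b \<oplus> finsum G (\<lambda>a. f a b) A) B"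
    using insert by (subst finsum_addf) (auto intro!: finsum_closed)
  also have "\<dots> = finsum G (\<lambda>b. finsum G (\<lambda>a. f a b) (insert x A)) B"
    using insert by (intro finsum_cong) (auto intro!: finsum_closed)
  finally show ?case .
qed

lemma (in abelian_monoid) finsum_nz:
  assumes "finsum G f A \<noteq> \<zero>"
  shows "\<exists>a\<in>A. f a \<noteq> \<zero>"
proof (rule ccontr)
  assume "\<not> ?thesis"
  then have "finsum G f A = finsum G (\<lambda>_. \<zero>) A"
    by (intro finsum_cong) auto
  with assms show False by simp
qed

lemma gsupp_extend:
  assumes "abelian_monoid R" "finite S" "gsupp R G a \<subseteq> S"
    "\<And>t. t \<in> S \<Longrightarrow> t \<notin> gsupp R G a \<Longrightarrow> F t = \<zero>\<^bsub>R\<^esub>" "\<And>t. t \<in> S \<Longrightarrow> F t \<in> carrier R"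
  shows "finsum R F (gsupp R G a) = finsum R F S"
proof -
  interpret abelian_monoid R by fact
  show ?thesis using assms by (intro add.finprod_mono_neutral_cong_right[symmetric]) auto
qed

lemma gr_val:
  assumes "abelian_monoid R" "f \<in> carrier (group_ring R G)"
  shows "f x \<in> carrier R"
  using assms abelian_monoid.zero_closed[OF assms(1)] by (cases "x \<in> carrier G") (auto simp: gr_carrier)

lemma gr_out:
  assumes "f \<in> carrier (group_ring R G)" "x \<notin> carrier G"
  shows "f x = \<zero>\<^bsub>R\<^esub>"
  using assms by (auto simp: gr_carrier)

lemma gsupp_sub: "gsupp R G f \<subseteq> carrier G"
  by (auto simp: gsupp_def)

lemma gr_fin: "f \<in> carrier (group_ring R G) \<Longrightarrow> finite (gsupp R G f)"
  by (auto simp: gr_carrier)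

lemma gr_mult_closed:
  assumes R: "ring R" and G: "group G" and a: "a \<in> carrier (group_ring R G)" and b: "b \<in> carrier (group_ring R G)"
  shows "a \<otimes>\<^bsub>group_ring R G\<^esub> b \<in> carrier (group_ring R G)"
proof -
  interpret R: ring R by fact
  interpret G: group G by fact
  have av: "\<And>x. a x \<in> carrier R" and bv: "\<And>x. b x \<in> carrier R"
    using gr_val[OF R.abelian_monoid_axioms a] gr_val[OF R.abelian_monoid_axioms b] by auto
  have "gsupp R G (a \<otimes>\<^bsub>group_ring R G\<^esub> b) \<subseteq> (\<lambda>(t,s). t \<otimes>\<^bsub>G\<^esub> s) ` (gsupp R G a \<times> gsupp R G b)"
  proof
    fix x assume "x \<in> gsupp R G (a \<otimes>\<^bsub>group_ring R G\<^esub> b)"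
    then have x: "x \<in> carrier G" and nz: "finsum R (\<lambda>t. a t \<otimes>\<^bsub>R\<^esub> b (inv\<^bsub>G\<^esub> t \<otimes>\<^bsub>G\<^esub> x)) (gsupp R G a) \<noteq> \<zero>\<^bsub>R\<^esub>"
      by (auto simp: gsupp_def gr_simps)
    obtain t where t: "t \<in> gsupp R G a" and nz2: "a t \<otimes>\<^bsub>R\<^esub> b (inv\<^bsub>G\<^esub> t \<otimes>\<^bsub>G\<^esub> x) \<noteq> \<zero>\<^bsub>R\<^esub>"
      using R.finsum_nz[OF nz] by blast
    have tG: "t \<in> carrier G" using t by (auto simp: gsupp_def)
    have "b (inv\<^bsub>G\<^esub> t \<otimes>\<^bsub>G\<^esub> x) \<noteq> \<zero>\<^bsub>R\<^esub>" using nz2 av by auto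
    then have "inv\<^bsub>G\<^esub> t \<otimes>\<^bsub>G\<^esub> x \<in> gsupp R G b" using tG x by (auto simp: gsupp_def)
    moreover have "x = t \<otimes>\<^bsub>G\<^esub> (inv\<^bsub>G\<^esub> t \<otimes>\<^bsub>G\<^esub> x)" using tG x by (simp add: G.m_assoc[symmetric])
    ultimately show "x \<in> (\<lambda>(t,s). t \<otimes>\<^bsub>G\<^esub> s) ` (gsupp R G a \<times> gsupp R G b)"
      using t by force
  qed
  moreover have "finite ((\<lambda>(t,s). t \<otimes>\<^bsub>G\<^esub> s) ` (gsupp R G a \<times> gsupp R G b))"
    using a b by (auto simp: gr_carrier)
  ultimately have "finite (gsupp R G (a \<otimes>\<^bsub>group_ring R G\<^esub> b))" by (rule finite_subset)
  moreover have "\<And>x. x \<in> carrier G \<Longrightarrow> (a \<otimes>\<^bsub>group_ring R G\<^esub> b) x \<in> carrier R"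
    using av bv by (auto simp: gr_simps intro!: R.finsum_closed)
  ultimately show ?thesis by (auto simp: gr_carrier gr_simps)
qed

definition D1ab where
  "D1ab R G a1 b2 g h = finsum R (\<lambda>t. a1 t \<otimes>\<^bsub>R\<^esub> b2 (g \<otimes>\<^bsub>G\<^esub> t) (inv\<^bsub>G\<^esub> t \<otimes>\<^bsub>G\<^esub> h)) (gsupp R G a1)"
definition D1ba where
  "D1ba R G b1 a2 g h = finsum R (\<lambda>t. b1 g t \<otimes>\<^bsub>R\<^esub> a2 (inv\<^bsub>G\<^esub> t \<otimes>\<^bsub>G\<^esub> h)) (gsupp R G (b1 g))"
definition D1bb where
  "D1bb R G b1 b2 g h = finsum R (\<lambda>t. b1 g t \<otimes>\<^bsub>R\<^esub> b2 (g \<otimes>\<^bsub>G\<^esub> t) (inv\<^bsub>G\<^esub> t \<otimes>\<^bsub>G\<^esub> h)) (gsupp R G (b1 g))"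

lemma D1_mult_eq:
  "D1_mult R G (a1, b1) (a2, b2) = (a1 \<otimes>\<^bsub>group_ring R G\<^esub> a2,
     (\<lambda>g h. if g \<in> carrier G \<and> h \<in> carrier G then D1ab R G a1 b2 g h \<oplus>\<^bsub>R\<^esub> D1ba R G b1 a2 g h \<oplus>\<^bsub>R\<^esub> D1bb R G b1 b2 g h
                else \<zero>\<^bsub>R\<^esub>))"
  by (auto simp: D1_mult_def D1ab_def D1ba_def D1bb_def Let_def intro!: ext)

lemma D1_mult_closed:
  assumes R: "ring R" and G: "group G"
    and a1: "a1 \<in> carrier (group_ring R G)" and b1: "b1 \<in> carrier (group_ring (group_ring R G) G)"
    and a2: "a2 \<in> carrier (group_ring R G)" and b2: "b2 \<in> carrier (group_ring (group_ring R G) G)"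
  shows "D1_mult R G (a1, b1) (a2, b2) \<in> carrier (D1 R G)"
proof -
  interpret R: ring R by fact
  interpret G: group G by fact
  have am: "abelian_monoid R" by (rule R.abelian_monoid_axioms)
  have amG: "abelian_monoid (group_ring R G)" by (rule gr_am[OF am])
  have av1: "\<And>x. a1 x \<in> carrier R" and av2: "\<And>x. a2 x \<in> carrier R"
    using gr_val[OF am a1] gr_val[OF am a2] by auto
  have bc1: "\<And>g. b1 g \<in> carrier (group_ring R G)" and bc2: "\<And>g. b2 g \<in> carrier (group_ring R G)"
    using gr_val[OF amG b1] gr_val[OF amG b2] by auto
  have bv1: "\<And>g x. b1 g x \<in> carrier R" and bv2: "\<And>g x. b2 g x \<in> carrier R"
    using gr_val[OF am bc1] gr_val[OF am bc2] by auto
  have b1z: "\<And>g x. g \<notin> carrier G \<Longrightarrow> b1 g x = \<zero>\<^bsub>R\<^esub>" and b2z: "\<And>g x. g \<notin> carrier G \<Longrightarrow> b2 g x = \<zero>\<^bsub>R\<^esub>"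
    using gr_out[OF b1] gr_out[OF b2] by (auto simp: gr_simps)
  have ab_c: "D1ab R G a1 b2 g h \<in> carrier R" for g h
    unfolding D1ab_def using av1 bv2 by (auto intro!: R.finsum_closed)
  have ba_c: "D1ba R G b1 a2 g h \<in> carrier R" for g h
    unfolding D1ba_def using av2 bv1 by (auto intro!: R.finsum_closed)
  have bb_c: "D1bb R G b1 b2 g h \<in> carrier R" for g h
    unfolding D1bb_def using bv1 bv2 by (auto intro!: R.finsum_closed)
  have inv_eq: "\<And>t h. t \<in> carrier G \<Longrightarrow> h \<in> carrier G \<Longrightarrow> h = t \<otimes>\<^bsub>G\<^esub> (inv\<^bsub>G\<^esub> t \<otimes>\<^bsub>G\<^esub> h)"
    by (simp add: G.m_assoc[symmetric])
  have inv_eq2: "\<And>t g. t \<in> carrier G \<Longrightarrow> g \<in> carrier G \<Longrightarrow> g = (g \<otimes>\<^bsub>G\<^esub> t) \<otimes>\<^bsub>G\<^esub> inv\<^bsub>G\<^esub> t"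
    by (simp add: G.m_assoc)
  have fa1: "finite (gsupp R G a1)" and fa2: "finite (gsupp R G a2)" using a1 a2 by (auto simp: gr_carrier)
  have fb1: "\<And>g. finite (gsupp R G (b1 g))" and fb2: "\<And>g. finite (gsupp R G (b2 g))"
    using bc1 bc2 by (auto simp: gr_carrier)
  have fB1: "finite (gsupp (group_ring R G) G b1)" and fB2: "finite (gsupp (group_ring R G) G b2)"
    using b1 b2 by (auto simp: gr_carrier)
  define B where "B = (\<lambda>g h. if g \<in> carrier G \<and> h \<in> carrier G then D1ab R G a1 b2 g h \<oplus>\<^bsub>R\<^esub> D1ba R G b1 a2 g h \<oplus>\<^bsub>R\<^esub> D1bb R G b1 b2 g h
                else \<zero>\<^bsub>R\<^esub>)"
  have three: "\<And>x y z. x \<in> carrier R \<Longrightarrow> y \<in> carrier R \<Longrightarrow> z \<in> carrier R \<Longrightarrow> x \<oplus>\<^bsub>R\<^esub> y \<oplus>\<^bsub>R\<^esub> z \<noteq> \<zero>\<^bsub>R\<^esub> \<Longrightarrow>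
     x \<noteq> \<zero>\<^bsub>R\<^esub> \<or> y \<noteq> \<zero>\<^bsub>R\<^esub> \<or> z \<noteq> \<zero>\<^bsub>R\<^esub>"
    by auto
  have hsupp: "{h \<in> carrier G. B g h \<noteq> \<zero>\<^bsub>R\<^esub>} \<subseteq>
      (\<Union>t\<in>gsupp R G a1. (\<lambda>s. t \<otimes>\<^bsub>G\<^esub> s) ` gsupp R G (b2 (g \<otimes>\<^bsub>G\<^esub> t))) \<union>
      (\<Union>t\<in>gsupp R G (b1 g). (\<lambda>s. t \<otimes>\<^bsub>G\<^esub> s) ` gsupp R G a2) \<union>
      (\<Union>t\<in>gsupp R G (b1 g). (\<lambda>s. t \<otimes>\<^bsub>G\<^esub> s) ` gsupp R G (b2 (g \<otimes>\<^bsub>G\<^esub> t)))" if gG: "g \<in> carrier G" for g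
  proof
    fix h assume "h \<in> {h \<in> carrier G. B g h \<noteq> \<zero>\<^bsub>R\<^esub>}"
    then have hG: "h \<in> carrier G" and nz: "D1ab R G a1 b2 g h \<oplus>\<^bsub>R\<^esub> D1ba R G b1 a2 g h \<oplus>\<^bsub>R\<^esub> D1bb R G b1 b2 g h \<noteq> \<zero>\<^bsub>R\<^esub>"
      using gG by (auto simp: B_def)
    from three[OF ab_c ba_c bb_c nz]
    consider "D1ab R G a1 b2 g h \<noteq> \<zero>\<^bsub>R\<^esub>" | "D1ba R G b1 a2 g h \<noteq> \<zero>\<^bsub>R\<^esub>" | "D1bb R G b1 b2 g h \<noteq> \<zero>\<^bsub>R\<^esub>" by blast
    then show "h \<in> (\<Union>t\<in>gsupp R G a1. (\<lambda>s. t \<otimes>\<^bsub>G\<^esub> s) ` gsupp R G (b2 (g \<otimes>\<^bsub>G\<^esub> t))) \<union>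
      (\<Union>t\<in>gsupp R G (b1 g). (\<lambda>s. t \<otimes>\<^bsub>G\<^esub> s) ` gsupp R G a2) \<union>
      (\<Union>t\<in>gsupp R G (b1 g). (\<lambda>s. t \<otimes>\<^bsub>G\<^esub> s) ` gsupp R G (b2 (g \<otimes>\<^bsub>G\<^esub> t)))"
    proof cases
      case 1
      then obtain t where t: "t \<in> gsupp R G a1" and "a1 t \<otimes>\<^bsub>R\<^esub> b2 (g \<otimes>\<^bsub>G\<^esub> t) (inv\<^bsub>G\<^esub> t \<otimes>\<^bsub>G\<^esub> h) \<noteq> \<zero>\<^bsub>R\<^esub>"
        unfolding D1ab_def using R.finsum_nz by blast
      then have "b2 (g \<otimes>\<^bsub>G\<^esub> t) (inv\<^bsub>G\<^esub> t \<otimes>\<^bsub>G\<^esub> h) \<noteq> \<zero>\<^bsub>R\<^esub>" using av1 by auto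
      moreover have tG: "t \<in> carrier G" using t by (auto simp: gsupp_def)
      ultimately have "inv\<^bsub>G\<^esub> t \<otimes>\<^bsub>G\<^esub> h \<in> gsupp R G (b2 (g \<otimes>\<^bsub>G\<^esub> t))" using hG by (auto simp: gsupp_def)
      then show ?thesis using t inv_eq[OF tG hG] by blast
    next
      case 2
      then obtain t where t: "t \<in> gsupp R G (b1 g)" and "b1 g t \<otimes>\<^bsub>R\<^esub> a2 (inv\<^bsub>G\<^esub> t \<otimes>\<^bsub>G\<^esub> h) \<noteq> \<zero>\<^bsub>R\<^esub>"
        unfolding D1ba_def using R.finsum_nz by blast
      then have "a2 (inv\<^bsub>G\<^esub> t \<otimes>\<^bsub>G\<^esub> h) \<noteq> \<zero>\<^bsub>R\<^esub>" using bv1 by auto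
      moreover have tG: "t \<in> carrier G" using t by (auto simp: gsupp_def)
      ultimately have "inv\<^bsub>G\<^esub> t \<otimes>\<^bsub>G\<^esub> h \<in> gsupp R G a2" using hG by (auto simp: gsupp_def)
      then show ?thesis using t inv_eq[OF tG hG] by blast
    next
      case 3
      then obtain t where t: "t \<in> gsupp R G (b1 g)" and "b1 g t \<otimes>\<^bsub>R\<^esub> b2 (g \<otimes>\<^bsub>G\<^esub> t) (inv\<^bsub>G\<^esub> t \<otimes>\<^bsub>G\<^esub> h) \<noteq> \<zero>\<^bsub>R\<^esub>"
        unfolding D1bb_def using R.finsum_nz by blast
      then have "b2 (g \<otimes>\<^bsub>G\<^esub> t) (inv\<^bsub>G\<^esub> t \<otimes>\<^bsub>G\<^esub> h) \<noteq> \<zero>\<^bsub>R\<^esub>" using bv1 by auto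
      moreover have tG: "t \<in> carrier G" using t by (auto simp: gsupp_def)
      ultimately have "inv\<^bsub>G\<^esub> t \<otimes>\<^bsub>G\<^esub> h \<in> gsupp R G (b2 (g \<otimes>\<^bsub>G\<^esub> t))" using hG by (auto simp: gsupp_def)
      then show ?thesis using t inv_eq[OF tG hG] by blast
    qed
  qed
  have Bg: "B g \<in> carrier (group_ring R G)" for g
  proof (cases "g \<in> carrier G")
    case True
    have "finite {h \<in> carrier G. B g h \<noteq> \<zero>\<^bsub>R\<^esub>}"
      by (rule finite_subset[OF hsupp[OF True]]) (use fa1 fa2 fb1 fb2 in auto)
    then show ?thesis using ab_c ba_c bb_c by (auto simp: gr_carrier B_def gsupp_def)
  next
    case False
    then show ?thesis by (auto simp: gr_carrier B_def gsupp_def)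
  qed
  have gsupp: "gsupp (group_ring R G) G B \<subseteq> (\<lambda>(s,t). s \<otimes>\<^bsub>G\<^esub> inv\<^bsub>G\<^esub> t) ` (gsupp (group_ring R G) G b2 \<times> gsupp R G a1) \<union> gsupp (group_ring R G) G b1"
  proof
    fix g assume "g \<in> gsupp (group_ring R G) G B"
    then have gG: "g \<in> carrier G" and "B g \<noteq> (\<lambda>x. \<zero>\<^bsub>R\<^esub>)" by (auto simp: gsupp_def gr_simps)
    then obtain h where "B g h \<noteq> \<zero>\<^bsub>R\<^esub>" by auto
    then have hG: "h \<in> carrier G" and nz: "D1ab R G a1 b2 g h \<oplus>\<^bsub>R\<^esub> D1ba R G b1 a2 g h \<oplus>\<^bsub>R\<^esub> D1bb R G b1 b2 g h \<noteq> \<zero>\<^bsub>R\<^esub>"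
      using gG by (auto simp: B_def split: if_splits)
    from three[OF ab_c ba_c bb_c nz]
    consider "D1ab R G a1 b2 g h \<noteq> \<zero>\<^bsub>R\<^esub>" | "D1ba R G b1 a2 g h \<noteq> \<zero>\<^bsub>R\<^esub>" | "D1bb R G b1 b2 g h \<noteq> \<zero>\<^bsub>R\<^esub>" by blast
    then show "g \<in> (\<lambda>(s,t). s \<otimes>\<^bsub>G\<^esub> inv\<^bsub>G\<^esub> t) ` (gsupp (group_ring R G) G b2 \<times> gsupp R G a1) \<union> gsupp (group_ring R G) G b1"
    proof cases
      case 1
      then obtain t where t: "t \<in> gsupp R G a1" and "a1 t \<otimes>\<^bsub>R\<^esub> b2 (g \<otimes>\<^bsub>G\<^esub> t) (inv\<^bsub>G\<^esub> t \<otimes>\<^bsub>G\<^esub> h) \<noteq> \<zero>\<^bsub>R\<^esub>"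
        unfolding D1ab_def using R.finsum_nz by blast
      then have "b2 (g \<otimes>\<^bsub>G\<^esub> t) (inv\<^bsub>G\<^esub> t \<otimes>\<^bsub>G\<^esub> h) \<noteq> \<zero>\<^bsub>R\<^esub>" using av1 by auto
      then have "b2 (g \<otimes>\<^bsub>G\<^esub> t) \<noteq> \<zero>\<^bsub>group_ring R G\<^esub>" by (auto simp: gr_simps)
      moreover have tG: "t \<in> carrier G" using t by (auto simp: gsupp_def)
      ultimately have "g \<otimes>\<^bsub>G\<^esub> t \<in> gsupp (group_ring R G) G b2" using gG by (auto simp: gsupp_def)
      then show ?thesis using t inv_eq2[OF tG gG]
        by (intro UnI1) (rule image_eqI[where x="(g \<otimes>\<^bsub>G\<^esub> t, t)"], auto)
    next
      case 2
      then obtain t where "b1 g t \<otimes>\<^bsub>R\<^esub> a2 (inv\<^bsub>G\<^esub> t \<otimes>\<^bsub>G\<^esub> h) \<noteq> \<zero>\<^bsub>R\<^esub>"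
        unfolding D1ba_def using R.finsum_nz by blast
      then have "b1 g t \<noteq> \<zero>\<^bsub>R\<^esub>" using av2 by auto
      then have "b1 g \<noteq> \<zero>\<^bsub>group_ring R G\<^esub>" by (auto simp: gr_simps)
      then show ?thesis using gG by (auto simp: gsupp_def)
    next
      case 3
      then obtain t where "b1 g t \<otimes>\<^bsub>R\<^esub> b2 (g \<otimes>\<^bsub>G\<^esub> t) (inv\<^bsub>G\<^esub> t \<otimes>\<^bsub>G\<^esub> h) \<noteq> \<zero>\<^bsub>R\<^esub>"
        unfolding D1bb_def using R.finsum_nz by blast
      then have "b1 g t \<noteq> \<zero>\<^bsub>R\<^esub>" using bv2 by auto
      then have "b1 g \<noteq> \<zero>\<^bsub>group_ring R G\<^esub>" by (auto simp: gr_simps)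
      then show ?thesis using gG by (auto simp: gsupp_def)
    qed
  qed
  have "finite (gsupp (group_ring R G) G B)"
    by (rule finite_subset[OF gsupp]) (use fa1 fB1 fB2 in auto)
  moreover have "\<forall>g. g \<notin> carrier G \<longrightarrow> B g = \<zero>\<^bsub>group_ring R G\<^esub>"
    by (auto simp: B_def gr_simps)
  ultimately have "B \<in> carrier (group_ring (group_ring R G) G)"
    using Bg unfolding gr_carrier[of B] by blast
  moreover have "a1 \<otimes>\<^bsub>group_ring R G\<^esub> a2 \<in> carrier (group_ring R G)"
    by (rule gr_mult_closed[OF R G a1 a2])
  ultimately show ?thesis by (simp add: D1_mult_eq D1_carrier B_def)
qed

lemma mr_mult_closed:
  assumes "ring R" "M \<in> carrier (matrix_ring n R)" "N \<in> carrier (matrix_ring n R)"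
  shows "M \<otimes>\<^bsub>matrix_ring n R\<^esub> N \<in> carrier (matrix_ring n R)"
proof -
  interpret ring R by fact
  show ?thesis using assms(2,3) by (auto simp: mr_carrier mr_simps intro!: finsum_closed)
qed

lemma swap_extend:
  fixes n :: nat
  assumes R: "ring R" and S: "finite S" "S \<subseteq> carrier G"
    and sub: "\<And>l. l < n \<Longrightarrow> gsupp R G (A l) \<subseteq> S"
    and Tc: "\<And>l t. l < n \<Longrightarrow> T l t \<in> carrier R"
    and Tz: "\<And>l t. l < n \<Longrightarrow> t \<in> S \<Longrightarrow> A l t = \<zero>\<^bsub>R\<^esub> \<Longrightarrow> T l t = \<zero>\<^bsub>R\<^esub>"
  shows "finsum R (\<lambda>t. finsum R (\<lambda>l. T l t) {..<n}) S = finsum R (\<lambda>l. finsum R (\<lambda>t. T l t) (gsupp R G (A l))) {..<n}"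
proof -
  interpret ring R by fact
  have "finsum R (\<lambda>t. finsum R (\<lambda>l. T l t) {..<n}) S = finsum R (\<lambda>l. finsum R (\<lambda>t. T l t) S) {..<n}"
    using S Tc by (intro finsum_swap) auto
  also have "\<dots> = finsum R (\<lambda>l. finsum R (\<lambda>t. T l t) (gsupp R G (A l))) {..<n}"
  proof (rule finsum_cong')
    fix l assume l: "l \<in> {..<n}"
    show "finsum R (\<lambda>t. T l t) S = finsum R (\<lambda>t. T l t) (gsupp R G (A l))"
    proof (rule gsupp_extend[OF abelian_monoid_axioms S(1), symmetric])
      show "gsupp R G (A l) \<subseteq> S" using l sub by auto
      show "\<And>t. t \<in> S \<Longrightarrow> t \<notin> gsupp R G (A l) \<Longrightarrow> T l t = \<zero>\<^bsub>R\<^esub>"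
        using l S Tz by (auto simp: gsupp_def)
      show "\<And>t. t \<in> S \<Longrightarrow> T l t \<in> carrier R" using l Tc by auto
    qed
  qed (use Tc in \<open>auto intro!: finsum_closed\<close>)
  finally show ?thesis .
qed

lemma entry_facts:
  assumes "ring k" "a \<in> carrier (group_ring (matrix_ring n k) G)" "i < n" "j < n"
  shows "a t i j \<in> carrier k" "gsupp k G (\<lambda>g. a g i j) \<subseteq> gsupp (matrix_ring n k) G a"
proof -
  interpret ring k by fact
  have "a t \<in> carrier (matrix_ring n k)" by (rule gr_val[OF mr_am[OF abelian_monoid_axioms] assms(2)])
  then show "a t i j \<in> carrier k" using assms by (auto simp: mr_carrier)
  show "gsupp k G (\<lambda>g. a g i j) \<subseteq> gsupp (matrix_ring n k) G a"
    by (auto simp: gsupp_def mr_simps)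
qed

lemma conv_entry:
  assumes R: "ring k" and G: "group G" and a1: "a1 \<in> carrier (group_ring (matrix_ring n k) G)"
    and a2: "a2 \<in> carrier (group_ring (matrix_ring n k) G)" and ij: "i < n" "j < n"
  shows "(a1 \<otimes>\<^bsub>group_ring (matrix_ring n k) G\<^esub> a2) x i j =
     finsum k (\<lambda>l. ((\<lambda>g. a1 g i l) \<otimes>\<^bsub>group_ring k G\<^esub> (\<lambda>g. a2 g l j)) x) {..<n}"
proof -
  interpret ring k by fact
  interpret G: group G by fact
  have amM: "abelian_monoid (matrix_ring n k)" by (rule mr_am[OF abelian_monoid_axioms])
  have e1: "\<And>t l. l < n \<Longrightarrow> a1 t i l \<in> carrier k" using entry_facts(1)[OF R a1] ij by auto
  have e2: "\<And>t l. l < n \<Longrightarrow> a2 t l j \<in> carrier k" using entry_facts(1)[OF R a2] ij by auto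
  show ?thesis
  proof (cases "x \<in> carrier G")
    case True
    have "(a1 \<otimes>\<^bsub>group_ring (matrix_ring n k) G\<^esub> a2) x i j =
      finsum (matrix_ring n k) (\<lambda>t. a1 t \<otimes>\<^bsub>matrix_ring n k\<^esub> a2 (inv\<^bsub>G\<^esub> t \<otimes>\<^bsub>G\<^esub> x)) (gsupp (matrix_ring n k) G a1) i j"
      using True by (simp add: gr_simps)
    also have "\<dots> = finsum k (\<lambda>t. (a1 t \<otimes>\<^bsub>matrix_ring n k\<^esub> a2 (inv\<^bsub>G\<^esub> t \<otimes>\<^bsub>G\<^esub> x)) i j) (gsupp (matrix_ring n k) G a1)"
      using gr_fin[OF a1] gr_val[OF amM a1] gr_val[OF amM a2] ij
      by (intro mr_finsum_eval[OF abelian_monoid_axioms]) (auto intro!: mr_mult_closed[OF R])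
    also have "\<dots> = finsum k (\<lambda>t. finsum k (\<lambda>l. a1 t i l \<otimes>\<^bsub>k\<^esub> a2 (inv\<^bsub>G\<^esub> t \<otimes>\<^bsub>G\<^esub> x) l j) {..<n}) (gsupp (matrix_ring n k) G a1)"
      using ij by (simp add: mr_simps)
    also have "\<dots> = finsum k (\<lambda>l. finsum k (\<lambda>t. a1 t i l \<otimes>\<^bsub>k\<^esub> a2 (inv\<^bsub>G\<^esub> t \<otimes>\<^bsub>G\<^esub> x) l j) (gsupp k G (\<lambda>g. a1 g i l))) {..<n}"
      by (rule swap_extend[OF R gr_fin[OF a1] gsupp_sub]) (use entry_facts[OF R a1] ij e1 e2 in auto)
    also have "\<dots> = finsum k (\<lambda>l. ((\<lambda>g. a1 g i l) \<otimes>\<^bsub>group_ring k G\<^esub> (\<lambda>g. a2 g l j)) x) {..<n}"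
      using True by (simp add: gr_simps)
    finally show ?thesis .
  next
    case False
    then show ?thesis by (simp add: gr_simps mr_simps)
  qed
qed

lemma entry2:
  assumes "ring k" "b \<in> carrier (group_ring (group_ring (matrix_ring n k) G) G)" "i < n" "j < n"
  shows "b x y i j \<in> carrier k" "b x \<in> carrier (group_ring (matrix_ring n k) G)" "b x y \<in> carrier (matrix_ring n k)"
proof -
  interpret ring k by fact
  have amM: "abelian_monoid (matrix_ring n k)" by (rule mr_am[OF abelian_monoid_axioms])
  show bx: "b x \<in> carrier (group_ring (matrix_ring n k) G)" by (rule gr_val[OF gr_am[OF amM] assms(2)])
  then show "b x y i j \<in> carrier k" using entry_facts(1)[OF assms(1) bx assms(3,4)] by simp
  show "b x y \<in> carrier (matrix_ring n k)" by (rule gr_val[OF amM bx])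
qed

lemma ab_entry:
  assumes R: "ring k" and G: "group G" and a1: "a1 \<in> carrier (group_ring (matrix_ring n k) G)"
    and b2: "b2 \<in> carrier (group_ring (group_ring (matrix_ring n k) G) G)" and ij: "i < n" "j < n"
  shows "D1ab (matrix_ring n k) G a1 b2 g h i j = finsum k (\<lambda>l. D1ab k G (\<lambda>g. a1 g i l) (\<lambda>g h. b2 g h l j) g h) {..<n}"
proof -
  interpret ring k by fact
  have amM: "abelian_monoid (matrix_ring n k)" by (rule mr_am[OF abelian_monoid_axioms])
  have e1: "\<And>t l. l < n \<Longrightarrow> a1 t i l \<in> carrier k" using entry_facts(1)[OF R a1] ij by auto
  have e2: "\<And>x y l. l < n \<Longrightarrow> b2 x y l j \<in> carrier k" using entry2(1)[OF R b2] ij by auto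
  have "D1ab (matrix_ring n k) G a1 b2 g h i j =
     finsum k (\<lambda>t. (a1 t \<otimes>\<^bsub>matrix_ring n k\<^esub> b2 (g \<otimes>\<^bsub>G\<^esub> t) (inv\<^bsub>G\<^esub> t \<otimes>\<^bsub>G\<^esub> h)) i j) (gsupp (matrix_ring n k) G a1)"
    unfolding D1ab_def
    using gr_fin[OF a1] gr_val[OF amM a1] entry2(3)[OF R b2] ij
    by (intro mr_finsum_eval[OF abelian_monoid_axioms]) (auto intro!: mr_mult_closed[OF R])
  also have "\<dots> = finsum k (\<lambda>t. finsum k (\<lambda>l. a1 t i l \<otimes>\<^bsub>k\<^esub> b2 (g \<otimes>\<^bsub>G\<^esub> t) (inv\<^bsub>G\<^esub> t \<otimes>\<^bsub>G\<^esub> h) l j) {..<n}) (gsupp (matrix_ring n k) G a1)"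
    using ij by (simp add: mr_simps)
  also have "\<dots> = finsum k (\<lambda>l. finsum k (\<lambda>t. a1 t i l \<otimes>\<^bsub>k\<^esub> b2 (g \<otimes>\<^bsub>G\<^esub> t) (inv\<^bsub>G\<^esub> t \<otimes>\<^bsub>G\<^esub> h) l j) (gsupp k G (\<lambda>g. a1 g i l))) {..<n}"
    by (rule swap_extend[OF R gr_fin[OF a1] gsupp_sub]) (use entry_facts[OF R a1] ij e1 e2 in auto)
  also have "\<dots> = finsum k (\<lambda>l. D1ab k G (\<lambda>g. a1 g i l) (\<lambda>g h. b2 g h l j) g h) {..<n}"
    by (simp add: D1ab_def)
  finally show ?thesis .
qed

lemma ba_entry:
  assumes R: "ring k" and G: "group G" and b1: "b1 \<in> carrier (group_ring (group_ring (matrix_ring n k) G) G)"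
    and a2: "a2 \<in> carrier (group_ring (matrix_ring n k) G)" and ij: "i < n" "j < n"
  shows "D1ba (matrix_ring n k) G b1 a2 g h i j = finsum k (\<lambda>l. D1ba k G (\<lambda>g h. b1 g h i l) (\<lambda>g. a2 g l j) g h) {..<n}"
proof -
  interpret ring k by fact
  have amM: "abelian_monoid (matrix_ring n k)" by (rule mr_am[OF abelian_monoid_axioms])
  have bg: "b1 g \<in> carrier (group_ring (matrix_ring n k) G)" by (rule entry2(2)[OF R b1 ij])
  have e1: "\<And>t l. l < n \<Longrightarrow> b1 g t i l \<in> carrier k" using entry2(1)[OF R b1] ij by auto
  have e2: "\<And>t l. l < n \<Longrightarrow> a2 t l j \<in> carrier k" using entry_facts(1)[OF R a2] ij by auto
  have "D1ba (matrix_ring n k) G b1 a2 g h i j =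
     finsum k (\<lambda>t. (b1 g t \<otimes>\<^bsub>matrix_ring n k\<^esub> a2 (inv\<^bsub>G\<^esub> t \<otimes>\<^bsub>G\<^esub> h)) i j) (gsupp (matrix_ring n k) G (b1 g))"
    unfolding D1ba_def
    using gr_fin[OF bg] gr_val[OF amM a2] entry2(3)[OF R b1] ij
    by (intro mr_finsum_eval[OF abelian_monoid_axioms]) (auto intro!: mr_mult_closed[OF R])
  also have "\<dots> = finsum k (\<lambda>t. finsum k (\<lambda>l. b1 g t i l \<otimes>\<^bsub>k\<^esub> a2 (inv\<^bsub>G\<^esub> t \<otimes>\<^bsub>G\<^esub> h) l j) {..<n}) (gsupp (matrix_ring n k) G (b1 g))"
    using ij by (simp add: mr_simps)
  also have "\<dots> = finsum k (\<lambda>l. finsum k (\<lambda>t. b1 g t i l \<otimes>\<^bsub>k\<^esub> a2 (inv\<^bsub>G\<^esub> t \<otimes>\<^bsub>G\<^esub> h) l j) (gsupp k G (\<lambda>t. b1 g t i l))) {..<n}"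
    by (rule swap_extend[OF R gr_fin[OF bg] gsupp_sub]) (use entry_facts[OF R bg] ij e1 e2 in auto)
  also have "\<dots> = finsum k (\<lambda>l. D1ba k G (\<lambda>g h. b1 g h i l) (\<lambda>g. a2 g l j) g h) {..<n}"
    by (simp add: D1ba_def)
  finally show ?thesis .
qed

lemma bb_entry:
  assumes R: "ring k" and G: "group G" and b1: "b1 \<in> carrier (group_ring (group_ring (matrix_ring n k) G) G)"
    and b2: "b2 \<in> carrier (group_ring (group_ring (matrix_ring n k) G) G)" and ij: "i < n" "j < n"
  shows "D1bb (matrix_ring n k) G b1 b2 g h i j = finsum k (\<lambda>l. D1bb k G (\<lambda>g h. b1 g h i l) (\<lambda>g h. b2 g h l j) g h) {..<n}"
proof -
  interpret ring k by fact
  have amM: "abelian_monoid (matrix_ring n k)" by (rule mr_am[OF abelian_monoid_axioms])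
  have bg: "b1 g \<in> carrier (group_ring (matrix_ring n k) G)" by (rule entry2(2)[OF R b1 ij])
  have e1: "\<And>t l. l < n \<Longrightarrow> b1 g t i l \<in> carrier k" using entry2(1)[OF R b1] ij by auto
  have e2: "\<And>x y l. l < n \<Longrightarrow> b2 x y l j \<in> carrier k" using entry2(1)[OF R b2] ij by auto
  have "D1bb (matrix_ring n k) G b1 b2 g h i j =
     finsum k (\<lambda>t. (b1 g t \<otimes>\<^bsub>matrix_ring n k\<^esub> b2 (g \<otimes>\<^bsub>G\<^esub> t) (inv\<^bsub>G\<^esub> t \<otimes>\<^bsub>G\<^esub> h)) i j) (gsupp (matrix_ring n k) G (b1 g))"
    unfolding D1bb_def
    using gr_fin[OF bg] entry2(3)[OF R b1] entry2(3)[OF R b2] ij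
    by (intro mr_finsum_eval[OF abelian_monoid_axioms]) (auto intro!: mr_mult_closed[OF R])
  also have "\<dots> = finsum k (\<lambda>t. finsum k (\<lambda>l. b1 g t i l \<otimes>\<^bsub>k\<^esub> b2 (g \<otimes>\<^bsub>G\<^esub> t) (inv\<^bsub>G\<^esub> t \<otimes>\<^bsub>G\<^esub> h) l j) {..<n}) (gsupp (matrix_ring n k) G (b1 g))"
    using ij by (simp add: mr_simps)
  also have "\<dots> = finsum k (\<lambda>l. finsum k (\<lambda>t. b1 g t i l \<otimes>\<^bsub>k\<^esub> b2 (g \<otimes>\<^bsub>G\<^esub> t) (inv\<^bsub>G\<^esub> t \<otimes>\<^bsub>G\<^esub> h) l j) (gsupp k G (\<lambda>t. b1 g t i l))) {..<n}"
    by (rule swap_extend[OF R gr_fin[OF bg] gsupp_sub]) (use entry_facts[OF R bg] ij e1 e2 in auto)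
  also have "\<dots> = finsum k (\<lambda>l. D1bb k G (\<lambda>g h. b1 g h i l) (\<lambda>g h. b2 g h l j) g h) {..<n}"
    by (simp add: D1bb_def)
  finally show ?thesis .
qed

lemma canon_entry_closed:
  assumes R: "ring k" and a: "a \<in> carrier (group_ring (matrix_ring n k) G)"
    and b: "b \<in> carrier (group_ring (group_ring (matrix_ring n k) G) G)" and ij: "i < n" "j < n"
  shows "(\<lambda>g. a g i j) \<in> carrier (group_ring k G)" "(\<lambda>g h. b g h i j) \<in> carrier (group_ring (group_ring k G) G)"
proof -
  interpret ring k by fact
  show "(\<lambda>g. a g i j) \<in> carrier (group_ring k G)"
    using entry_facts[OF R a ij] gr_fin[OF a] gr_out[OF a]
    by (auto simp: gr_carrier mr_simps intro: finite_subset)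
  have bg: "(\<lambda>h. b g h i j) \<in> carrier (group_ring k G)" for g
  proof -
    have bx: "b g \<in> carrier (group_ring (matrix_ring n k) G)" by (rule entry2(2)[OF R b ij])
    have "finite (gsupp k G (\<lambda>h. b g h i j))"
      by (rule finite_subset[OF entry_facts(2)[OF R bx ij] gr_fin[OF bx]])
    then show ?thesis using entry_facts(1)[OF R bx ij] gr_out[OF bx]
      by (auto simp: gr_carrier mr_simps)
  qed
  have "gsupp (group_ring k G) G (\<lambda>g h. b g h i j) \<subseteq> gsupp (group_ring (matrix_ring n k) G) G b"
    by (auto simp: gsupp_def gr_simps mr_simps)
  then have "finite (gsupp (group_ring k G) G (\<lambda>g h. b g h i j))"
    using gr_fin[OF b] by (rule finite_subset)
  moreover have "\<And>g. g \<notin> carrier G \<Longrightarrow> (\<lambda>h. b g h i j) = \<zero>\<^bsub>group_ring k G\<^esub>"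
    using gr_out[OF b] by (auto simp: gr_simps mr_simps)
  ultimately show "(\<lambda>g h. b g h i j) \<in> carrier (group_ring (group_ring k G) G)"
    using bg unfolding gr_carrier[of "\<lambda>g h. b g h i j"] by blast
qed

lemma canon_closed:
  assumes R: "ring k" and p: "p \<in> carrier (D1 (matrix_ring n k) G)"
  shows "D1_matrix_canon p \<in> carrier (matrix_ring n (D1 k G))"
proof -
  interpret ring k by fact
  obtain a b where pab: "p = (a, b)" by (cases p)
  have a: "a \<in> carrier (group_ring (matrix_ring n k) G)" and b: "b \<in> carrier (group_ring (group_ring (matrix_ring n k) G) G)"
    using p pab by (auto simp: D1_carrier)
  have amM: "abelian_monoid (matrix_ring n k)" by (rule mr_am[OF abelian_monoid_axioms])
  have z1: "\<not> (i < n \<and> j < n) \<Longrightarrow> a g i j = \<zero>\<^bsub>k\<^esub>" for g i j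
    using gr_val[OF amM a, of g] by (auto simp: mr_carrier)
  have z2: "\<not> (i < n \<and> j < n) \<Longrightarrow> b g h i j = \<zero>\<^bsub>k\<^esub>" for g h i j
    using gr_val[OF amM gr_val[OF gr_am[OF amM] b, of g], of h] by (auto simp: mr_carrier)
  show ?thesis
    using canon_entry_closed[OF R a b] z1 z2
    by (auto simp: mr_carrier D1_carrier D1_matrix_canon_def pab D1_simps gr_simps)
qed

lemma canon_mult:
  assumes R: "ring k" and G: "group G" and p: "p \<in> carrier (D1 (matrix_ring n k) G)"
    and q: "q \<in> carrier (D1 (matrix_ring n k) G)"
  shows "D1_matrix_canon (p \<otimes>\<^bsub>D1 (matrix_ring n k) G\<^esub> q) =
    D1_matrix_canon p \<otimes>\<^bsub>matrix_ring n (D1 k G)\<^esub> D1_matrix_canon q"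
proof -
  interpret ring k by fact
  have am: "abelian_monoid k" by (rule abelian_monoid_axioms)
  have amM: "abelian_monoid (matrix_ring n k)" by (rule mr_am[OF am])
  have amG: "abelian_monoid (group_ring k G)" by (rule gr_am[OF am])
  obtain a1 b1 where p1: "p = (a1, b1)" by (cases p)
  obtain a2 b2 where q1: "q = (a2, b2)" by (cases q)
  have a1: "a1 \<in> carrier (group_ring (matrix_ring n k) G)" and b1: "b1 \<in> carrier (group_ring (group_ring (matrix_ring n k) G) G)"
    using p p1 by (auto simp: D1_carrier)
  have a2: "a2 \<in> carrier (group_ring (matrix_ring n k) G)" and b2: "b2 \<in> carrier (group_ring (group_ring (matrix_ring n k) G) G)"
    using q q1 by (auto simp: D1_carrier)
  show ?thesis
  proof (intro ext)
    fix i j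
    show "D1_matrix_canon (p \<otimes>\<^bsub>D1 (matrix_ring n k) G\<^esub> q) i j =
      (D1_matrix_canon p \<otimes>\<^bsub>matrix_ring n (D1 k G)\<^esub> D1_matrix_canon q) i j"
    proof (cases "i < n \<and> j < n")
      case True
      then have ij: "i < n" "j < n" by auto
      define F where "F l = D1_mult k G ((\<lambda>g. a1 g i l), (\<lambda>g h. b1 g h i l)) ((\<lambda>g. a2 g l j), (\<lambda>g h. b2 g h l j))" for l
      have Fcl: "F l \<in> carrier (D1 k G)" if l: "l < n" for l
        unfolding F_def
        by (rule D1_mult_closed[OF R G])
           (use canon_entry_closed[OF R a1 b1 ij(1) l] canon_entry_closed[OF R a2 b2 l ij(2)] in auto)
      have Fc1: "fst (F l) \<in> carrier (group_ring k G)" and Fc2: "snd (F l) \<in> carrier (group_ring (group_ring k G) G)"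
        if "l < n" for l using Fcl[OF that] by (auto simp: D1_carrier)
      have Fc3: "snd (F l) g \<in> carrier (group_ring k G)" if "l < n" for l g
        by (rule gr_val[OF amG Fc2[OF that]])
      have Ffst: "fst (F l) = (\<lambda>g. a1 g i l) \<otimes>\<^bsub>group_ring k G\<^esub> (\<lambda>g. a2 g l j)" for l
        by (simp add: F_def D1_mult_eq)
      have Fsnd: "snd (F l) g h = (if g \<in> carrier G \<and> h \<in> carrier G then
          D1ab k G (\<lambda>g. a1 g i l) (\<lambda>g h. b2 g h l j) g h \<oplus>\<^bsub>k\<^esub> D1ba k G (\<lambda>g h. b1 g h i l) (\<lambda>g. a2 g l j) g h
          \<oplus>\<^bsub>k\<^esub> D1bb k G (\<lambda>g h. b1 g h i l) (\<lambda>g h. b2 g h l j) g h else \<zero>\<^bsub>k\<^esub>)" for l g h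
        by (simp add: F_def D1_mult_eq)
      have rhs: "(D1_matrix_canon p \<otimes>\<^bsub>matrix_ring n (D1 k G)\<^esub> D1_matrix_canon q) i j = finsum (D1 k G) F {..<n}"
        using ij by (simp add: mr_simps D1_simps D1_matrix_canon_def p1 q1 F_def[abs_def])
      also have "\<dots> = (finsum (group_ring k G) (\<lambda>l. fst (F l)) {..<n}, finsum (group_ring (group_ring k G) G) (\<lambda>l. snd (F l)) {..<n})"
        using Fcl by (intro D1_finsum[OF am]) auto
      finally have rhs: "(D1_matrix_canon p \<otimes>\<^bsub>matrix_ring n (D1 k G)\<^esub> D1_matrix_canon q) i j =
        (finsum (group_ring k G) (\<lambda>l. fst (F l)) {..<n}, finsum (group_ring (group_ring k G) G) (\<lambda>l. snd (F l)) {..<n})" .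
      have e1: "finsum (group_ring k G) (\<lambda>l. fst (F l)) {..<n} x = (a1 \<otimes>\<^bsub>group_ring (matrix_ring n k) G\<^esub> a2) x i j" for x
      proof -
        have "finsum (group_ring k G) (\<lambda>l. fst (F l)) {..<n} x = finsum k (\<lambda>l. fst (F l) x) {..<n}"
          using Fc1 by (intro gr_finsum_eval[OF am]) auto
        also have "\<dots> = (a1 \<otimes>\<^bsub>group_ring (matrix_ring n k) G\<^esub> a2) x i j"
          by (simp add: Ffst conv_entry[OF R G a1 a2 ij])
        finally show ?thesis .
      qed
      have e2: "finsum (group_ring (group_ring k G) G) (\<lambda>l. snd (F l)) {..<n} g h =
         snd (D1_mult (matrix_ring n k) G (a1, b1) (a2, b2)) g h i j" for g h
      proof -
        have "finsum (group_ring (group_ring k G) G) (\<lambda>l. snd (F l)) {..<n} g h =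
            finsum (group_ring k G) (\<lambda>l. snd (F l) g) {..<n} h"
          using Fc2 by (subst gr_finsum_eval[OF amG]) auto
        also have "\<dots> = finsum k (\<lambda>l. snd (F l) g h) {..<n}"
          using Fc3 by (intro gr_finsum_eval[OF am]) auto
        also have "\<dots> = snd (D1_mult (matrix_ring n k) G (a1, b1) (a2, b2)) g h i j"
        proof (cases "g \<in> carrier G \<and> h \<in> carrier G")
          case True
          have c1: "D1ab k G (\<lambda>g. a1 g i l) (\<lambda>g h. b2 g h l j) g h \<in> carrier k" if "l < n" for l
            unfolding D1ab_def using entry_facts(1)[OF R a1] entry2(1)[OF R b2] ij that
            by (auto intro!: finsum_closed)
          have c2: "D1ba k G (\<lambda>g h. b1 g h i l) (\<lambda>g. a2 g l j) g h \<in> carrier k" if "l < n" for l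
            unfolding D1ba_def using entry_facts(1)[OF R a2] entry2(1)[OF R b1] ij that
            by (auto intro!: finsum_closed)
          have c3: "D1bb k G (\<lambda>g h. b1 g h i l) (\<lambda>g h. b2 g h l j) g h \<in> carrier k" if "l < n" for l
            unfolding D1bb_def using entry2(1)[OF R b2] entry2(1)[OF R b1] ij that
            by (auto intro!: finsum_closed)
          have "finsum k (\<lambda>l. snd (F l) g h) {..<n} = finsum k (\<lambda>l.
              D1ab k G (\<lambda>g. a1 g i l) (\<lambda>g h. b2 g h l j) g h \<oplus>\<^bsub>k\<^esub> D1ba k G (\<lambda>g h. b1 g h i l) (\<lambda>g. a2 g l j) g h
              \<oplus>\<^bsub>k\<^esub> D1bb k G (\<lambda>g h. b1 g h i l) (\<lambda>g h. b2 g h l j) g h) {..<n}"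
            using True by (simp add: Fsnd)
          also have "\<dots> = finsum k (\<lambda>l. D1ab k G (\<lambda>g. a1 g i l) (\<lambda>g h. b2 g h l j) g h) {..<n}
             \<oplus>\<^bsub>k\<^esub> finsum k (\<lambda>l. D1ba k G (\<lambda>g h. b1 g h i l) (\<lambda>g. a2 g l j) g h) {..<n}
             \<oplus>\<^bsub>k\<^esub> finsum k (\<lambda>l. D1bb k G (\<lambda>g h. b1 g h i l) (\<lambda>g h. b2 g h l j) g h) {..<n}"
            using c1 c2 c3 by (simp add: finsum_addf)
          also have "\<dots> = snd (D1_mult (matrix_ring n k) G (a1, b1) (a2, b2)) g h i j"
            using True ij by (simp add: D1_mult_eq mr_simps ab_entry[OF R G a1 b2 ij] ba_entry[OF R G b1 a2 ij] bb_entry[OF R G b1 b2 ij])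
          finally show ?thesis .
        next
          case False
          have "finsum k (\<lambda>l. snd (F l) g h) {..<n} = finsum k (\<lambda>l. \<zero>\<^bsub>k\<^esub>) {..<n}"
            using False by (intro finsum_cong') (auto simp: Fsnd)
          then show ?thesis using False by (auto simp: D1_mult_eq mr_simps)
        qed
        finally show ?thesis .
      qed
      show ?thesis
        unfolding rhs using e1 e2 by (simp add: D1_matrix_canon_def p1 q1 D1_simps D1_mult_eq[of _ _ a1 b1 a2 b2] fun_eq_iff)
    next
      case False
      have "(a1 \<otimes>\<^bsub>group_ring (matrix_ring n k) G\<^esub> a2) x \<in> carrier (matrix_ring n k)" for x
        using gr_val[OF amM a1] gr_val[OF amM a2] abelian_monoid.zero_closed[OF amM]
        by (auto simp: gr_simps intro!: abelian_monoid.finsum_closed[OF amM] mr_mult_closed[OF R])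
      then have "(a1 \<otimes>\<^bsub>group_ring (matrix_ring n k) G\<^esub> a2) x i j = \<zero>\<^bsub>k\<^esub>" for x
        using False by (auto simp: mr_carrier)
      then show ?thesis using False
        by (auto simp: D1_matrix_canon_def p1 q1 D1_simps D1_mult_eq mr_simps gr_simps fun_eq_iff)
    qed
  qed
qed

lemma canon_add:
  "D1_matrix_canon (p \<oplus>\<^bsub>D1 (matrix_ring n k) G\<^esub> q) =
    D1_matrix_canon p \<oplus>\<^bsub>matrix_ring n (D1 k G)\<^esub> D1_matrix_canon q"
  by (auto simp: D1_matrix_canon_def D1_simps mr_simps gr_simps fun_eq_iff)

lemma canon_one:
  "D1_matrix_canon \<one>\<^bsub>D1 (matrix_ring n k) G\<^esub> = \<one>\<^bsub>matrix_ring n (D1 k G)\<^esub>"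
  by (auto simp: D1_matrix_canon_def D1_simps mr_simps gr_simps fun_eq_iff)

lemma canon_inj:
  assumes R: "ring k" and p: "p \<in> carrier (D1 (matrix_ring n k) G)" and q: "q \<in> carrier (D1 (matrix_ring n k) G)"
    and eq: "D1_matrix_canon p = D1_matrix_canon q"
  shows "p = q"
proof -
  interpret ring k by fact
  have amM: "abelian_monoid (matrix_ring n k)" by (rule mr_am[OF abelian_monoid_axioms])
  obtain a1 b1 where p1: "p = (a1, b1)" by (cases p)
  obtain a2 b2 where q1: "q = (a2, b2)" by (cases q)
  have a1: "a1 \<in> carrier (group_ring (matrix_ring n k) G)" and b1: "b1 \<in> carrier (group_ring (group_ring (matrix_ring n k) G) G)"
    using p p1 by (auto simp: D1_carrier)
  have a2: "a2 \<in> carrier (group_ring (matrix_ring n k) G)" and b2: "b2 \<in> carrier (group_ring (group_ring (matrix_ring n k) G) G)"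
    using q q1 by (auto simp: D1_carrier)
  have e: "a1 g i j = a2 g i j" "b1 g h i j = b2 g h i j" for g h i j
  proof -
    have "D1_matrix_canon p i j = D1_matrix_canon q i j" using eq by simp
    then have "(\<lambda>g. a1 g i j) = (\<lambda>g. a2 g i j)" "(\<lambda>g h. b1 g h i j) = (\<lambda>g h. b2 g h i j)"
      by (auto simp: D1_matrix_canon_def p1 q1)
    then show "a1 g i j = a2 g i j" "b1 g h i j = b2 g h i j" by (auto dest: fun_cong)
  qed
  then show ?thesis by (auto simp: p1 q1 fun_eq_iff)
qed

lemma canon_surj:
  assumes R: "ring k" and Q: "Q \<in> carrier (matrix_ring n (D1 k G))"
  shows "Q \<in> D1_matrix_canon ` carrier (D1 (matrix_ring n k) G)"
proof -
  interpret ring k by fact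
  have amG: "abelian_monoid (group_ring k G)" by (rule gr_am[OF abelian_monoid_axioms])
  define a where "a = (\<lambda>g i j. fst (Q i j) g)"
  define b where "b = (\<lambda>g h i j. snd (Q i j) g h)"
  have Qc: "fst (Q i j) \<in> carrier (group_ring k G)" "snd (Q i j) \<in> carrier (group_ring (group_ring k G) G)"
    if "i < n" "j < n" for i j
    using Q that by (auto simp: mr_carrier D1_carrier)
  have Qz: "fst (Q i j) = (\<lambda>x. \<zero>\<^bsub>k\<^esub>)" "snd (Q i j) = (\<lambda>x y. \<zero>\<^bsub>k\<^esub>)" if "\<not> (i < n \<and> j < n)" for i j
    using Q that by (auto simp: mr_carrier D1_simps gr_simps)
  have Qc2: "snd (Q i j) g \<in> carrier (group_ring k G)" if "i < n" "j < n" for i j g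
    by (rule gr_val[OF amG Qc(2)[OF that]])
  have fin1: "finite (gsupp (matrix_ring n k) G a)"
  proof (rule finite_subset)
    show "gsupp (matrix_ring n k) G a \<subseteq> (\<Union>i<n. \<Union>j<n. gsupp k G (fst (Q i j)))"
    proof
      fix g assume "g \<in> gsupp (matrix_ring n k) G a"
      then have gG: "g \<in> carrier G" and "a g \<noteq> (\<lambda>i j. \<zero>\<^bsub>k\<^esub>)" by (auto simp: gsupp_def mr_simps)
      then obtain i j where "a g i j \<noteq> \<zero>\<^bsub>k\<^esub>" by (auto simp: fun_eq_iff)
      moreover have "i < n \<and> j < n"
      proof (rule ccontr)
        assume "\<not> (i < n \<and> j < n)"
        from Qz(1)[OF this] calculation show False by (simp add: a_def)
      qed
      ultimately show "g \<in> (\<Union>i<n. \<Union>j<n. gsupp k G (fst (Q i j)))" using gG by (auto simp: gsupp_def a_def)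
    qed
    show "finite (\<Union>i<n. \<Union>j<n. gsupp k G (fst (Q i j)))" using Qc gr_fin by blast
  qed
  have fin2: "finite (gsupp (matrix_ring n k) G (b g))" for g
  proof (rule finite_subset)
    show "gsupp (matrix_ring n k) G (b g) \<subseteq> (\<Union>i<n. \<Union>j<n. gsupp k G (snd (Q i j) g))"
    proof
      fix h assume "h \<in> gsupp (matrix_ring n k) G (b g)"
      then have hG: "h \<in> carrier G" and "b g h \<noteq> (\<lambda>i j. \<zero>\<^bsub>k\<^esub>)" by (auto simp: gsupp_def mr_simps)
      then obtain i j where "b g h i j \<noteq> \<zero>\<^bsub>k\<^esub>" by (auto simp: fun_eq_iff)
      moreover have "i < n \<and> j < n"
      proof (rule ccontr)
        assume "\<not> (i < n \<and> j < n)"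
        from Qz(2)[OF this] calculation show False by (simp add: b_def)
      qed
      ultimately show "h \<in> (\<Union>i<n. \<Union>j<n. gsupp k G (snd (Q i j) g))" using hG by (auto simp: gsupp_def b_def)
    qed
    show "finite (\<Union>i<n. \<Union>j<n. gsupp k G (snd (Q i j) g))" using Qc2 gr_fin by blast
  qed
  have fin3: "finite (gsupp (group_ring (matrix_ring n k) G) G b)"
  proof (rule finite_subset)
    show "gsupp (group_ring (matrix_ring n k) G) G b \<subseteq> (\<Union>i<n. \<Union>j<n. gsupp (group_ring k G) G (snd (Q i j)))"
    proof
      fix g assume "g \<in> gsupp (group_ring (matrix_ring n k) G) G b"
      then have gG: "g \<in> carrier G" and "b g \<noteq> (\<lambda>h i j. \<zero>\<^bsub>k\<^esub>)" by (auto simp: gsupp_def mr_simps gr_simps)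
      then obtain h i j where "b g h i j \<noteq> \<zero>\<^bsub>k\<^esub>" by (auto simp: fun_eq_iff)
      moreover have "i < n \<and> j < n"
      proof (rule ccontr)
        assume "\<not> (i < n \<and> j < n)"
        from Qz(2)[OF this] calculation show False by (simp add: b_def)
      qed
      ultimately show "g \<in> (\<Union>i<n. \<Union>j<n. gsupp (group_ring k G) G (snd (Q i j)))" using gG
        by (auto simp: gsupp_def b_def gr_simps fun_eq_iff)
    qed
    show "finite (\<Union>i<n. \<Union>j<n. gsupp (group_ring k G) G (snd (Q i j)))" using Qc gr_fin by blast
  qed
  have av: "a g \<in> carrier (matrix_ring n k)" for g
    using Qc(1) Qz(1) gr_val[OF abelian_monoid_axioms Qc(1)] by (auto simp: mr_carrier a_def)
  have aout: "g \<notin> carrier G \<Longrightarrow> a g = \<zero>\<^bsub>matrix_ring n k\<^esub>" for g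
  proof -
    assume gG: "g \<notin> carrier G"
    have "fst (Q i j) g = \<zero>\<^bsub>k\<^esub>" for i j
    proof (cases "i < n \<and> j < n")
      case True
      then show ?thesis using gr_out[OF Qc(1) gG] by auto
    next
      case False
      then show ?thesis using Qz(1)[OF False] by simp
    qed
    then show ?thesis by (simp add: a_def mr_simps fun_eq_iff)
  qed
  have bv: "b g h \<in> carrier (matrix_ring n k)" for g h
    using Qc2 Qz(2) gr_val[OF abelian_monoid_axioms Qc2] by (auto simp: mr_carrier b_def)
  have bout: "h \<notin> carrier G \<Longrightarrow> b g h = \<zero>\<^bsub>matrix_ring n k\<^esub>" for g h
  proof -
    assume hG: "h \<notin> carrier G"
    have "snd (Q i j) g h = \<zero>\<^bsub>k\<^esub>" for i j
    proof (cases "i < n \<and> j < n")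
      case True
      then show ?thesis using gr_out[OF Qc2 hG] by auto
    next
      case False
      then show ?thesis using Qz(2)[OF False] by simp
    qed
    then show ?thesis by (simp add: b_def mr_simps fun_eq_iff)
  qed
  have bout2: "g \<notin> carrier G \<Longrightarrow> b g = \<zero>\<^bsub>group_ring (matrix_ring n k) G\<^esub>" for g
  proof -
    assume gG: "g \<notin> carrier G"
    have "snd (Q i j) g h = \<zero>\<^bsub>k\<^esub>" for i j h
    proof (cases "i < n \<and> j < n")
      case True
      then show ?thesis using gr_out[OF Qc(2) gG] by (auto simp: gr_simps)
    next
      case False
      then show ?thesis using Qz(2)[OF False] by simp
    qed
    then show ?thesis by (auto simp: b_def gr_simps mr_simps fun_eq_iff)
  qed
  have bg: "b g \<in> carrier (group_ring (matrix_ring n k) G)" for g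
    using bv bout fin2 unfolding gr_carrier[of "b g"] by blast
  have "(a, b) \<in> carrier (D1 (matrix_ring n k) G)"
    unfolding D1_carrier fst_conv snd_conv gr_carrier[of a] gr_carrier[of b]
    using av aout fin1 bg bout2 fin3 by blast
  moreover have "D1_matrix_canon (a, b) = Q"
    by (auto simp: D1_matrix_canon_def a_def b_def fun_eq_iff)
  ultimately show ?thesis by blast
qed

theorem proposition7p1:
  fixes k :: "'a ring" and G :: "'g monoid" and n :: nat
  assumes "ring k" and "group G" and "n \<ge> 1"
  shows "D1_matrix_canon \<in> ring_iso (D1 (matrix_ring n k) G) (matrix_ring n (D1 k G))"
  unfolding ring_iso_def
proof (intro CollectI conjI)
  show "D1_matrix_canon \<in> ring_hom (D1 (matrix_ring n k) G) (matrix_ring n (D1 k G))"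
    unfolding ring_hom_def
    using canon_closed[OF assms(1)] canon_mult[OF assms(1,2)] canon_add canon_one by auto
  show "bij_betw D1_matrix_canon (carrier (D1 (matrix_ring n k) G)) (carrier (matrix_ring n (D1 k G)))"
    unfolding bij_betw_def inj_on_def
    using canon_inj[OF assms(1)] canon_surj[OF assms(1)] canon_closed[OF assms(1)] by blast
qed

end
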